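(* Let $m\ge 0$ and $k\ge 1$ be integers such that $f=2^{m+k+1}+2^k-1$ is prime, and put $a=2^{m+k}f$ and $b=2^m f$. Let $x,y$ be positive integers with $(x-b)(y-b)=b^2$ such that $p=x-1$, $q=y-1$, $r=xy-1$ are primes, $p\neq q$, and none of $p,q,r$ divides $a$ (in particular none equals $f$ or $2$). Then $apq$ and $ar$ are amicable numbers.
   Context: For a positive integer $N$, $\sigma(N)$ denotes the sum of all positive divisors of $N$. Positive integers $M,N$ are amicable if $\sigma(M)-M=N$ and $\sigma(N)-N=M$. *)

theory Defs
  imports "HOL-Computational_Algebra.Primes"
begin

definition sigma :: "nat \<Rightarrow> nat" where
  "sigma N = (\<Sum>d \<in> {d. d dvd N}. d)"

definition amicable :: "nat \<Rightarrow> nat \<Rightarrow> bool" where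
  "amicable M N \<longleftrightarrow> M > 0 \<and> N > 0 \<and>
     int (sigma M) - int M = int N \<and> int (sigma N) - int N = int M"

end

theory Submission
  imports Defs
begin

lemma sigma_mult_prime:
  fixes n p :: nat
  assumes "prime p" "\<not> p dvd n" "n > 0"
  shows "sigma (n * p) = sigma n * (p + 1)"
proof -
  have fin: "finite {d. d dvd n}" using assms(3) by simp
  have eq: "{d. d dvd n * p} = {d. d dvd n} \<union> (\<lambda>d. d * p) ` {d. d dvd n}"
  proof (intro set_eqI iffI)
    fix d assume "d \<in> {d. d dvd n * p}"
    hence d: "d dvd n * p" by simp
    show "d \<in> {d. d dvd n} \<union> (\<lambda>d. d * p) ` {d. d dvd n}"
    proof (cases "p dvd d")
      case True
      then obtain e where e: "d = p * e" by (auto elim: dvdE)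
      with d have "p * e dvd p * n" by (simp add: mult.commute)
      hence "e dvd n" using prime_gt_0_nat[OF assms(1)] by simp
      thus ?thesis using e by (auto simp: mult.commute)
    next
      case False
      hence "coprime d p" using assms(1)
        by (metis coprime_commute prime_imp_coprime)
      hence "d dvd n" using d by (simp add: coprime_dvd_mult_left_iff)
      thus ?thesis by simp
    qed
  next
    fix d assume "d \<in> {d. d dvd n} \<union> (\<lambda>d. d * p) ` {d. d dvd n}"
    thus "d \<in> {d. d dvd n * p}" by auto
  qed
  have disj: "{d. d dvd n} \<inter> (\<lambda>d. d * p) ` {d. d dvd n} = {}"
  proof (rule ccontr)
    assume "\<not> ?thesis"
    then obtain d where "d dvd n" "d * p dvd n" by auto
    hence "p dvd n" using dvd_mult_right by blast
    thus False using assms(2) by simp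
  qed
  have inj: "inj_on (\<lambda>d. d * p) {d. d dvd n}"
    using assms(1) by (auto simp: inj_on_def prime_gt_0_nat)
  have "sigma (n * p) = sigma n + sum (\<lambda>d. d * p) {d. d dvd n}"
    unfolding sigma_def eq
    by (subst sum.union_disjoint) (use fin disj in auto, simp add: sum.reindex[OF inj])
  also have "sum (\<lambda>d. d * p) {d. d dvd n} = sigma n * p"
    unfolding sigma_def by (simp add: sum_distrib_right)
  finally show ?thesis by (simp add: algebra_simps)
qed

lemma sum_pow2: "(\<Sum>i\<le>e. (2::nat) ^ i) + 1 = 2 ^ Suc e"
  by (induction e) auto

lemma sigma_pow2: "sigma (2 ^ e) + 1 = 2 ^ Suc e"
proof -
  have "{d. d dvd (2::nat) ^ e} = (\<lambda>i. 2 ^ i) ` {..e}"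
    using divides_primepow_nat[OF two_is_prime_nat, of _ e] by auto
  moreover have "inj_on (\<lambda>i. (2::nat) ^ i) {..e}" by (auto simp: inj_on_def)
  ultimately have "sigma (2 ^ e) = (\<Sum>i\<le>e. (2::nat) ^ i)"
    unfolding sigma_def by (simp add: sum.reindex)
  thus ?thesis using sum_pow2 by simp
qed

lemma alg:
  fixes S A B K X Y :: int
  assumes "S = K*(2*B-1)" "A = K*B" "(X-B)*(Y-B) = B^2"
  shows "S*(X*Y) - A*(X-1)*(Y-1) = A*(X*Y-1)"
    and "S*(X*Y) - A*(X*Y-1) = A*(X-1)*(Y-1)"
  using assms by algebra+

lemma alg2:
  fixes P K :: int
  shows "(2*P*K - 1)*(2*P*K+K) = K*(2*(P*(2*P*K+K-1))-1)"
  by algebra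


theorem mainTheorem6:
  fixes m k x y :: nat
  assumes "k \<ge> 1"
    and "prime (2 ^ (m + k + 1) + 2 ^ k - 1 :: nat)"
    and "x > 0" and "y > 0"
    and "(int x - int (2 ^ m * (2 ^ (m + k + 1) + 2 ^ k - 1))) *
         (int y - int (2 ^ m * (2 ^ (m + k + 1) + 2 ^ k - 1)))
         = (int (2 ^ m * (2 ^ (m + k + 1) + 2 ^ k - 1))) ^ 2"
    and "prime (x - 1)" and "prime (y - 1)" and "prime (x * y - 1)"
    and "x - 1 \<noteq> y - 1"
    and "\<not> (x - 1) dvd 2 ^ (m + k) * (2 ^ (m + k + 1) + 2 ^ k - 1)"
    and "\<not> (y - 1) dvd 2 ^ (m + k) * (2 ^ (m + k + 1) + 2 ^ k - 1)"
    and "\<not> (x * y - 1) dvd 2 ^ (m + k) * (2 ^ (m + k + 1) + 2 ^ k - 1)"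
  shows "amicable (2 ^ (m + k) * (2 ^ (m + k + 1) + 2 ^ k - 1) * (x - 1) * (y - 1))
                  (2 ^ (m + k) * (2 ^ (m + k + 1) + 2 ^ k - 1) * (x * y - 1))"

proof -
  define f :: nat where "f = 2 ^ (m + k + 1) + 2 ^ k - 1"
  define a :: nat where "a = 2 ^ (m + k) * f"
  have K2: "(2::nat) ^ k \<ge> 2" using assms(1)
    by (metis power_increasing power_one_right one_le_numeral)
  have e1: "(2::nat) ^ (m + k + 1) = 2 * 2^m * 2^k" by (simp add: power_add)
  have e2: "(2::nat) ^ (m + k) = 2^m * 2^k" by (simp add: power_add)
  have fint: "int f = 2 * 2^m * 2^k + 2^k - 1" unfolding f_def e1 using K2 by (simp add: of_nat_diff)
  have fprime: "prime f" using assms(2) unfolding f_def .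
  have "(2::nat) ^ (m+k+1) \<ge> 2" using power_increasing[of 1 "m+k+1" "2::nat"] by simp
  hence f3: "f > 2" unfolding f_def using K2 by linarith
  have nf: "\<not> f dvd 2 ^ (m + k)"
  proof
    assume "f dvd 2 ^ (m + k)"
    hence "f dvd 2" using fprime prime_dvd_power by blast
    hence "f \<le> 2" by (simp add: dvd_imp_le)
    thus False using f3 by simp
  qed
  have sa: "sigma a = (2 ^ (m + k + 1) - 1) * (f + 1)"
    unfolding a_def using sigma_mult_prime[OF fprime nf] sigma_pow2[of "m+k"]
    by (metis Suc_eq_plus1 add_diff_cancel_right' zero_less_numeral zero_less_power)
  have a0: "a > 0" unfolding a_def using fprime prime_gt_0_nat by simp
  note A = assms[folded f_def, folded a_def]
  have p: "prime (x - 1)" "prime (y - 1)" "prime (x*y - 1)" using A by auto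
  have nq: "\<not> (y - 1) dvd a * (x - 1)"
  proof
    assume "(y - 1) dvd a * (x - 1)"
    hence "(y-1) dvd (x-1)" using A(11) prime_dvd_mult_iff[OF p(2)] by simp
    hence "y - 1 = x - 1" using primes_dvd_imp_eq[OF p(2) p(1)] by simp
    thus False using A(9) by simp
  qed
  have ap0: "a * (x-1) > 0" using a0 prime_gt_0_nat[OF p(1)] by simp
  have "sigma (a * (x-1) * (y-1)) = sigma (a * (x-1)) * (y - 1 + 1)"
    by (rule sigma_mult_prime[OF p(2) nq ap0])
  also have "\<dots> = sigma a * (x - 1 + 1) * (y - 1 + 1)"
    using sigma_mult_prime[OF p(1) A(10) a0] by simp
  also have "\<dots> = sigma a * x * y" using A(3,4) by simp
  finally have s1: "sigma (a * (x-1) * (y-1)) = sigma a * x * y" .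
  have xy0: "x * y > 0" using A(3,4) by simp
  have s2: "sigma (a * (x*y-1)) = sigma a * (x * y)"
  proof -
    have "x * y - 1 + 1 = x * y" using xy0 by simp
    thus ?thesis using sigma_mult_prime[OF p(3) A(12) a0] by metis
  qed
  define P :: int where "P = 2^m"
  define K :: int where "K = 2^k"
  define B :: int where "B = P * int f"
  have Sint: "int (sigma a) = K*(2*B-1)"
  proof -
    have ge: "(1::nat) \<le> 2 ^ (m + k + 1)" by simp
    have "int (sigma a) = int (2 ^ (m + k + 1) - 1) * (int f + 1)" by (simp only: sa of_nat_mult of_nat_add of_nat_1)
    also have "int (2 ^ (m + k + 1) - 1) = 2 ^ (m + k + 1) - 1" using ge by (simp add: of_nat_diff)
    also have "(2::int) ^ (m + k + 1) = 2 * P * K" unfolding P_def K_def by (simp add: power_add)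
    finally have "int (sigma a) = (2*P*K - 1)*(int f + 1)" .
    also have "\<dots> = (2*P*K - 1)*(2*P*K+K)" unfolding fint P_def K_def by simp
    also have "\<dots> = K*(2*B-1)" unfolding B_def fint using alg2[of P K] P_def K_def
      by (simp add: fint)
    finally show ?thesis .
  qed
  have Aint: "int a = K*B" unfolding a_def B_def P_def K_def e2 by simp
  have hyp: "(int x - B)*(int y - B) = B^2"
    using A(5) unfolding B_def P_def by simp
  have ix: "int (x-1) = int x - 1" "int (y-1) = int y - 1" "int (x*y-1) = int x * int y - 1"
    using A(3,4) xy0 by (auto simp: of_nat_diff)
  note L = alg[OF Sint Aint hyp]
  show ?thesis
    unfolding f_def[symmetric] a_def[symmetric] amicable_def
  proof (intro conjI)
    show "0 < a * (x - 1) * (y - 1)" using a0 prime_gt_0_nat[OF p(1)] prime_gt_0_nat[OF p(2)] by simp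
    show "0 < a * (x * y - 1)" using a0 prime_gt_0_nat[OF p(3)] by simp
    show "int (sigma (a * (x - 1) * (y - 1))) - int (a * (x - 1) * (y - 1)) = int (a * (x * y - 1))"
      using L(1) by (simp only: s1 s1[unfolded mult.assoc] of_nat_mult ix mult.assoc)
    show "int (sigma (a * (x * y - 1))) - int (a * (x * y - 1)) = int (a * (x - 1) * (y - 1))"
      using L(2) by (simp only: s2 s2[unfolded mult.assoc] of_nat_mult ix mult.assoc)
  qed
qed

end
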